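(* Let $(M,d,e)$ be a commutative comonoid in the symmetric monoidal category $\mathcal{C}_G$ of payoff Conway games. Then $M$ is a negative Conway game, i.e. every initial move of $M$ is an Opponent move.
   Context: A Conway game $A=(V_A,E_A,\lambda_A)$ is a rooted directed graph with root $\star_A$ and polarity $\lambda_A:E_A\to\{-1,+1\}$ ($-1$ Opponent, $+1$ Player); an initial move is an edge leaving $\star_A$. Plays are paths from the root; a strategy on $A$ is a set of alternating even-length plays containing the empty play, whose nonempty plays start with an Opponent move, closed under even-length prefixes and deterministic. A payoff game additionally has $\kappa_A=(\kappa^+_A,\kappa^-_A)$ from paths to $\mathbb{N}\times\mathbb{N}$ with: $\lambda_A(m)=-1\Rightarrow\kappa^+_A(m)=0$, $\lambda_A(m)=+1\Rightarrow\kappa^-_A(m)=0$; $\kappa_A(t)\le\kappa_A(s;t)$; $\kappa_A(s;t)\le\kappa_A(s)+\kappa_A(t)$; empty paths have payoff $(0,0)$. $A^*$ reverses polarities and swaps $\kappa^+,\kappa^-$; $A\otimes B$ is the product graph (moves in either component, polarity and payoff summed from projections); $1$ is the one-position game. $\mathcal{C}_G$ has payoff games as objects and as morphisms $A\to B$ the winning strategies on $A^*\otimes B$ (those whose every played path $s$ satisfies $\kappa^+(s)=0\Rightarrow\kappa^-(s)=0$), composed by parallel composition and hiding, with copycat identities; it is symmetric monoidal with $\otimes$, unit $1$ and symmetry $\alpha_{A,B}:A\otimes B\to B\otimes A$ the copycat strategy swapping components. A commutative comonoid is an object $M$ with $d:M\to M\otimes M$ and $e:M\to 1$ satisfying coassociativity,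 counit laws and $d;\alpha_{M,M}=d$. *)

theory Defs
  imports Main
begin

text \<open>A Conway game: a rooted directed (multi)graph with positions Pos, moves (edges) Mv,
  source/target maps, a root, a polarity pol (-1 = Opponent, +1 = Player) and a payoff
  (kp, km) = (kappa+, kappa-) on paths.\<close>

record ('v, 'e) cgame =
  Pos :: "'v set"
  Mv  :: "'e set"
  src :: "'e \<Rightarrow> 'v"
  tgt :: "'e \<Rightarrow> 'v"
  root :: "'v"
  pol :: "'e \<Rightarrow> int"
  kp  :: "'e list \<Rightarrow> nat"
  km  :: "'e list \<Rightarrow> nat"

fun path_from :: "('v, 'e) cgame \<Rightarrow> 'v \<Rightarrow> 'e list \<Rightarrow> bool" where
  "path_from G x [] = True"
| "path_from G x (m # s) = (m \<in> Mv G \<and> src G m = x \<and> path_from G (tgt G m) s)"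

definition is_path :: "('v, 'e) cgame \<Rightarrow> 'e list \<Rightarrow> bool" where
  "is_path G s \<longleftrightarrow> s = [] \<or> path_from G (src G (hd s)) s"

definition play :: "('v, 'e) cgame \<Rightarrow> 'e list \<Rightarrow> bool" where
  "play G s \<longleftrightarrow> path_from G (root G) s"

definition conway_game :: "('v, 'e) cgame \<Rightarrow> bool" where
  "conway_game G \<longleftrightarrow> root G \<in> Pos G \<and>
     (\<forall>m\<in>Mv G. src G m \<in> Pos G \<and> tgt G m \<in> Pos G \<and> pol G m \<in> {-1, 1})"

definition payoff_game :: "('v, 'e) cgame \<Rightarrow> bool" where
  "payoff_game G \<longleftrightarrow> conway_game G
     \<and> (\<forall>m\<in>Mv G. pol G m = -1 \<longrightarrow> kp G [m] = 0)
     \<and> (\<forall>m\<in>Mv G. pol G m = 1 \<longrightarrow> km G [m] = 0)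
     \<and> (\<forall>s t. is_path G (s @ t) \<longrightarrow> kp G t \<le> kp G (s @ t) \<and> km G t \<le> km G (s @ t))
     \<and> (\<forall>s t. is_path G (s @ t) \<longrightarrow>
            kp G (s @ t) \<le> kp G s + kp G t \<and> km G (s @ t) \<le> km G s + km G t)
     \<and> kp G [] = 0 \<and> km G [] = 0"

definition negative_game :: "('v, 'e) cgame \<Rightarrow> bool" where
  "negative_game G \<longleftrightarrow> (\<forall>m\<in>Mv G. src G m = root G \<longrightarrow> pol G m = -1)"

definition dual :: "('v, 'e) cgame \<Rightarrow> ('v, 'e) cgame" where
  "dual G = G\<lparr>pol := (\<lambda>m. - pol G m), kp := km G, km := kp G\<rparr>"

fun projL :: "(('a \<times> 'y) + ('x \<times> 'b)) list \<Rightarrow> 'a list" where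
  "projL [] = []"
| "projL (Inl (a, y) # s) = a # projL s"
| "projL (Inr _ # s) = projL s"

fun projR :: "(('a \<times> 'y) + ('x \<times> 'b)) list \<Rightarrow> 'b list" where
  "projR [] = []"
| "projR (Inl _ # s) = projR s"
| "projR (Inr (x, b) # s) = b # projR s"

text \<open>Tensor product: product graph, a move is a move in one component
  (tagged with the current position of the other component).\<close>
definition tensor :: "('va, 'ea) cgame \<Rightarrow> ('vb, 'eb) cgame
    \<Rightarrow> ('va \<times> 'vb, ('ea \<times> 'vb) + ('va \<times> 'eb)) cgame" where
  "tensor A B = \<lparr>
     Pos = Pos A \<times> Pos B,
     Mv = {Inl (a, y) | a y. a \<in> Mv A \<and> y \<in> Pos B} \<union> {Inr (x, b) | x b. x \<in> Pos A \<and> b \<in> Mv B},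
     src = (\<lambda>e. case e of Inl (a, y) \<Rightarrow> (src A a, y) | Inr (x, b) \<Rightarrow> (x, src B b)),
     tgt = (\<lambda>e. case e of Inl (a, y) \<Rightarrow> (tgt A a, y) | Inr (x, b) \<Rightarrow> (x, tgt B b)),
     root = (root A, root B),
     pol = (\<lambda>e. case e of Inl (a, y) \<Rightarrow> pol A a | Inr (x, b) \<Rightarrow> pol B b),
     kp = (\<lambda>s. kp A (projL s) + kp B (projR s)),
     km = (\<lambda>s. km A (projL s) + km B (projR s)) \<rparr>"

definition unitG :: "(unit, unit) cgame" where
  "unitG = \<lparr> Pos = {()}, Mv = {}, src = (\<lambda>_. ()), tgt = (\<lambda>_. ()), root = (),
             pol = (\<lambda>_. 1), kp = (\<lambda>_. 0), km = (\<lambda>_. 0) \<rparr>"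

definition alt :: "('v, 'e) cgame \<Rightarrow> 'e list \<Rightarrow> bool" where
  "alt G s \<longleftrightarrow> (\<forall>i < length s. pol G (s ! i) = (if even i then -1 else 1))"

definition strategy :: "('v, 'e) cgame \<Rightarrow> 'e list set \<Rightarrow> bool" where
  "strategy G \<sigma> \<longleftrightarrow> [] \<in> \<sigma>
     \<and> (\<forall>s\<in>\<sigma>. play G s \<and> even (length s) \<and> alt G s)
     \<and> (\<forall>s\<in>\<sigma>. \<forall>k. even k \<longrightarrow> take k s \<in> \<sigma>)
     \<and> (\<forall>s m n n'. s @ [m, n] \<in> \<sigma> \<longrightarrow> s @ [m, n'] \<in> \<sigma> \<longrightarrow> n = n')"

definition winning :: "('v, 'e) cgame \<Rightarrow> 'e list set \<Rightarrow> bool" where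
  "winning G \<sigma> \<longleftrightarrow> strategy G \<sigma> \<and> (\<forall>s\<in>\<sigma>. kp G s = 0 \<longrightarrow> km G s = 0)"

definition hom :: "('va, 'ea) cgame \<Rightarrow> ('vb, 'eb) cgame
    \<Rightarrow> (('ea \<times> 'vb) + ('va \<times> 'eb)) list set \<Rightarrow> bool" where
  "hom A B \<sigma> \<longleftrightarrow> winning (tensor (dual A) B) \<sigma>"

definition copycat :: "('va, 'ea) cgame \<Rightarrow> ('vb, 'eb) cgame \<Rightarrow> ('ea \<Rightarrow> 'eb)
    \<Rightarrow> (('ea \<times> 'vb) + ('va \<times> 'eb)) list set" where
  "copycat A B f = {s. play (tensor (dual A) B) s \<and> even (length s) \<and> alt (tensor (dual A) B) s
      \<and> (\<forall>k. even k \<longrightarrow> map f (projL (take k s)) = projR (take k s))}"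

definition idS :: "('v, 'e) cgame \<Rightarrow> (('e \<times> 'v) + ('v \<times> 'e)) list set" where
  "idS A = copycat A A id"

fun swapE :: "('ea \<times> 'vb) + ('va \<times> 'eb) \<Rightarrow> ('eb \<times> 'va) + ('vb \<times> 'ea)" where
  "swapE (Inl (a, y)) = Inr (y, a)"
| "swapE (Inr (x, b)) = Inl (b, x)"

definition symS where
  "symS A B = copycat (tensor A B) (tensor B A) swapE"

fun assocE :: "((('ea \<times> 'vb) + ('va \<times> 'eb)) \<times> 'vc) + (('va \<times> 'vb) \<times> 'ec)
     \<Rightarrow> ('ea \<times> ('vb \<times> 'vc)) + ('va \<times> (('eb \<times> 'vc) + ('vb \<times> 'ec)))" where
  "assocE (Inl (Inl (a, y), z)) = Inl (a, (y, z))"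
| "assocE (Inl (Inr (x, b), z)) = Inr (x, Inl (b, z))"
| "assocE (Inr ((x, y), c)) = Inr (x, Inr (y, c))"

definition assocS where
  "assocS A B C = copycat (tensor (tensor A B) C) (tensor A (tensor B C)) assocE"

definition lunitE :: "(unit \<times> 'v) + (unit \<times> 'e) \<Rightarrow> 'e" where
  "lunitE e = (case e of Inr (_, a) \<Rightarrow> a | Inl _ \<Rightarrow> undefined)"

definition runitE :: "('e \<times> unit) + ('v \<times> unit) \<Rightarrow> 'e" where
  "runitE e = (case e of Inl (a, _) \<Rightarrow> a | Inr _ \<Rightarrow> undefined)"

definition lunitS where
  "lunitS A = copycat (tensor unitG A) A lunitE"

definition runitS where
  "runitS A = copycat (tensor A unitG) A runitE"

text \<open>Interaction sequences are plays of (A (x) B) (x) C; we project them onto the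
  games A* (x) B, B* (x) C and A* (x) C (duality does not change the graph).\<close>

fun projAB :: "(((('ea \<times> 'vb) + ('va \<times> 'eb)) \<times> 'vc) + (('va \<times> 'vb) \<times> 'ec)) list
     \<Rightarrow> (('ea \<times> 'vb) + ('va \<times> 'eb)) list" where
  "projAB [] = []"
| "projAB (Inl (e, z) # u) = e # projAB u"
| "projAB (Inr _ # u) = projAB u"

fun projBC :: "(((('ea \<times> 'vb) + ('va \<times> 'eb)) \<times> 'vc) + (('va \<times> 'vb) \<times> 'ec)) list
     \<Rightarrow> (('eb \<times> 'vc) + ('vb \<times> 'ec)) list" where
  "projBC [] = []"
| "projBC (Inl (Inl _, z) # u) = projBC u"
| "projBC (Inl (Inr (x, b), z) # u) = Inl (b, z) # projBC u"
| "projBC (Inr ((x, y), c) # u) = Inr (y, c) # projBC u"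

fun projAC :: "(((('ea \<times> 'vb) + ('va \<times> 'eb)) \<times> 'vc) + (('va \<times> 'vb) \<times> 'ec)) list
     \<Rightarrow> (('ea \<times> 'vc) + ('va \<times> 'ec)) list" where
  "projAC [] = []"
| "projAC (Inl (Inl (a, y), z) # u) = Inl (a, z) # projAC u"
| "projAC (Inl (Inr _, z) # u) = projAC u"
| "projAC (Inr ((x, y), c) # u) = Inr (x, c) # projAC u"

definition compS :: "('va, 'ea) cgame \<Rightarrow> ('vb, 'eb) cgame \<Rightarrow> ('vc, 'ec) cgame
    \<Rightarrow> (('ea \<times> 'vb) + ('va \<times> 'eb)) list set \<Rightarrow> (('eb \<times> 'vc) + ('vb \<times> 'ec)) list set
    \<Rightarrow> (('ea \<times> 'vc) + ('va \<times> 'ec)) list set" where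
  "compS A B C \<sigma> \<tau> = {projAC u | u. play (tensor (tensor A B) C) u
      \<and> projAB u \<in> \<sigma> \<and> projBC u \<in> \<tau>}"

fun proj1 :: "(((('ea \<times> 'vc) + ('va \<times> 'ec)) \<times> ('vb \<times> 'vd))
       + (('va \<times> 'vc) \<times> (('eb \<times> 'vd) + ('vb \<times> 'ed)))) list
     \<Rightarrow> (('ea \<times> 'vb) + ('va \<times> 'eb)) list" where
  "proj1 [] = []"
| "proj1 (Inl (Inl (a, yc), (yb, yd)) # s) = Inl (a, yb) # proj1 s"
| "proj1 (Inl (Inr _, _) # s) = proj1 s"
| "proj1 (Inr ((xa, xc), Inl (b, yd)) # s) = Inr (xa, b) # proj1 s"
| "proj1 (Inr (_, Inr _) # s) = proj1 s"

fun proj2 :: "(((('ea \<times> 'vc) + ('va \<times> 'ec)) \<times> ('vb \<times> 'vd))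
       + (('va \<times> 'vc) \<times> (('eb \<times> 'vd) + ('vb \<times> 'ed)))) list
     \<Rightarrow> (('ec \<times> 'vd) + ('vc \<times> 'ed)) list" where
  "proj2 [] = []"
| "proj2 (Inl (Inl _, _) # s) = proj2 s"
| "proj2 (Inl (Inr (xa, c), (yb, yd)) # s) = Inl (c, yd) # proj2 s"
| "proj2 (Inr (_, Inl _) # s) = proj2 s"
| "proj2 (Inr ((xa, xc), Inr (yb, d)) # s) = Inr (xc, d) # proj2 s"

definition tensorS :: "('va, 'ea) cgame \<Rightarrow> ('vb, 'eb) cgame \<Rightarrow> ('vc, 'ec) cgame \<Rightarrow> ('vd, 'ed) cgame
    \<Rightarrow> (('ea \<times> 'vb) + ('va \<times> 'eb)) list set \<Rightarrow> (('ec \<times> 'vd) + ('vc \<times> 'ed)) list set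
    \<Rightarrow> (((('ea \<times> 'vc) + ('va \<times> 'ec)) \<times> ('vb \<times> 'vd))
        + (('va \<times> 'vc) \<times> (('eb \<times> 'vd) + ('vb \<times> 'ed)))) list set" where
  "tensorS A B C D \<sigma> \<tau> = {s. play (tensor (dual (tensor A C)) (tensor B D)) s \<and> even (length s)
      \<and> alt (tensor (dual (tensor A C)) (tensor B D)) s \<and> proj1 s \<in> \<sigma> \<and> proj2 s \<in> \<tau>}"

definition comm_comonoid :: "('v, 'e) cgame
    \<Rightarrow> (('e \<times> ('v \<times> 'v)) + ('v \<times> (('e \<times> 'v) + ('v \<times> 'e)))) list set
    \<Rightarrow> (('e \<times> unit) + ('v \<times> unit)) list set \<Rightarrow> bool" where
  "comm_comonoid M d e \<longleftrightarrow>
     payoff_game M \<and> hom M (tensor M M) d \<and> hom M unitG e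
     \<comment> \<open>coassociativity: d ; (d (x) id) ; assoc = d ; (id (x) d)\<close>
     \<and> compS M (tensor M M) (tensor M (tensor M M)) d
         (compS (tensor M M) (tensor (tensor M M) M) (tensor M (tensor M M))
            (tensorS M (tensor M M) M M d (idS M)) (assocS M M M))
       = compS M (tensor M M) (tensor M (tensor M M)) d
           (tensorS M M M (tensor M M) (idS M) d)
     \<comment> \<open>counit laws: d ; (e (x) id) ; lambda = id  and  d ; (id (x) e) ; rho = id\<close>
     \<and> compS M (tensor M M) M d
         (compS (tensor M M) (tensor unitG M) M (tensorS M unitG M M e (idS M)) (lunitS M))
       = idS M
     \<and> compS M (tensor M M) M d
         (compS (tensor M M) (tensor M unitG) M (tensorS M M M unitG (idS M) e) (runitS M))
       = idS M
     \<comment> \<open>commutativity: d ; alpha = d\<close>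
     \<and> compS M (tensor M M) (tensor M M) d (symS M M) = d"

end

theory Submission
  imports Defs
begin

lemma tensor_simps[simp]:
  "Mv (tensor A B) = {Inl (a, y) | a y. a \<in> Mv A \<and> y \<in> Pos B} \<union> {Inr (x, b) | x b. x \<in> Pos A \<and> b \<in> Mv B}"
  "Pos (tensor A B) = Pos A \<times> Pos B"
  "root (tensor A B) = (root A, root B)"
  "src (tensor A B) (Inl (a, y)) = (src A a, y)"
  "src (tensor A B) (Inr (x, b)) = (x, src B b)"
  "tgt (tensor A B) (Inl (a, y)) = (tgt A a, y)"
  "tgt (tensor A B) (Inr (x, b)) = (x, tgt B b)"
  "pol (tensor A B) (Inl (a, y)) = pol A a"
  "pol (tensor A B) (Inr (x, b)) = pol B b"
  by (simp_all add: tensor_def)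

lemma dual_simps[simp]:
  "Mv (dual A) = Mv A" "Pos (dual A) = Pos A" "root (dual A) = root A"
  "src (dual A) = src A" "tgt (dual A) = tgt A" "pol (dual A) m = - pol A m"
  by (simp_all add: dual_def)

definition fstOpp where "fstOpp G \<sigma> \<longleftrightarrow> (\<forall>s\<in>\<sigma>. s \<noteq> [] \<longrightarrow> pol G (hd s) = -1)"

lemma alt_fstOpp: "(\<And>s. s \<in> \<sigma> \<Longrightarrow> alt G s) \<Longrightarrow> fstOpp G \<sigma>"
  unfolding fstOpp_def alt_def by (metis hd_conv_nth length_greater_0_conv even_zero)

lemma move_cases:
  obtains a y z where "x = Inl (Inl (a, y), z)"
  | x' b z where "x = Inl (Inr (x', b), z)"
  | x' y c where "x = Inr ((x', y), c)"
  by (metis sum.exhaust prod.exhaust)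

lemma comp_fstOpp:
  assumes "fstOpp (tensor (dual A) B) \<sigma>" "fstOpp (tensor (dual B) C) \<tau>"
  shows "fstOpp (tensor (dual A) C) (compS A B C \<sigma> \<tau>)"
  unfolding fstOpp_def compS_def
proof (clarify)
  fix u assume h: "projAC u \<noteq> []" "projAB u \<in> \<sigma>" "projBC u \<in> \<tau>"
  then obtain x u' where u: "u = x # u'" by (cases u) auto
  show "pol (tensor (dual A) C) (hd (projAC u)) = -1"
  proof (cases x rule: move_cases)
    case (1 a y z)
    then show ?thesis using h assms u unfolding fstOpp_def by force
  next
    case (2 x' b z)
    then show ?thesis using h assms u unfolding fstOpp_def by force
  next
    case (3 x' y c)
    then show ?thesis using h assms u unfolding fstOpp_def by force
  qed
qed

lemma projAC_noInl: "(\<forall>y\<in>set (projAC u). \<not> isl y) \<Longrightarrow> (\<forall>x\<in>set (projAB u). \<not> isl x)"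
  by (induction u rule: projAC.induct) auto

lemma sym_part:
  fixes M :: "('v, 'e) cgame"
    and d :: "(('e \<times> ('v \<times> 'v)) + ('v \<times> (('e \<times> 'v) + ('v \<times> 'e)))) list set"
  assumes st: "strategy (tensor (dual M) (tensor M M)) d"
    and cm: "compS M (tensor M M) (tensor M M) d (symS M M) = d"
    and cg: "conway_game M"
    and m: "m \<in> Mv M" "src M m = root M"
    and t: "[Inl (m, (root M, root M)), Inr (tgt M m, b)] \<in> d"
    and b: "b \<in> Mv (tensor M M)" "src (tensor M M) b = (root M, root M)" "pol (tensor M M) b = 1"
  shows False
proof -
  let ?r = "root M"
  define u where "u = [Inl (Inl (m, (?r, ?r)), (?r, ?r)), Inl (Inr (tgt M m, b), (?r, ?r)),
     Inr ((tgt M m, tgt (tensor M M) b), swapE b)]"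
  have rP: "?r \<in> Pos M" using cg by (simp add: conway_game_def)
  have cgm: "\<And>a. a \<in> Mv M \<Longrightarrow> src M a \<in> Pos M \<and> tgt M a \<in> Pos M \<and> pol M a \<in> {-1, 1}"
    using cg by (simp add: conway_game_def)
  have pu: "play (tensor (tensor M (tensor M M)) (tensor M M)) u"
    using b m rP cgm[OF m(1)] unfolding u_def play_def
    by (cases b rule: sum.exhaust; auto dest: cgm)
  have ab: "projAB u \<in> d" using t by (simp add: u_def)
  have bc: "projBC u \<in> symS M M"
  proof -
    let ?s = "[Inl (b, (?r, ?r)), Inr (tgt (tensor M M) b, swapE b)]"
    have k: "\<forall>k. even k \<longrightarrow> map swapE (projL (take k ?s)) = projR (take k ?s)"
    proof (intro allI impI)
      fix k :: nat assume "even k"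
      then have "k = 0 \<or> k \<ge> 2" by presburger
      then show "map swapE (projL (take k ?s)) = projR (take k ?s)" by auto
    qed
    have pl: "play (tensor (dual (tensor M M)) (tensor M M)) ?s"
      using b m rP unfolding play_def
      by (cases b rule: sum.exhaust; auto dest: cgm)
    have al: "alt (tensor (dual (tensor M M)) (tensor M M)) ?s"
      using b unfolding alt_def
      by (cases b rule: sum.exhaust; auto simp: less_Suc_eq)
    show ?thesis using pl al k unfolding u_def symS_def copycat_def by simp
  qed
  have "projAC u \<in> d" using pu ab bc cm unfolding compS_def by blast
  hence t2: "[Inl (m, (?r, ?r)), Inr (tgt M m, swapE b)] \<in> d" by (simp add: u_def)
  have "b = swapE b"
  proof -
    have det: "\<forall>s m n n'. s @ [m, n] \<in> d \<longrightarrow> s @ [m, n'] \<in> d \<longrightarrow> n = n'"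
      using st unfolding strategy_def by blast
    show ?thesis using det[rule_format, of "[]", simplified, OF t t2] by simp
  qed
  then show False by (cases b rule: sum.exhaust) auto
qed

theorem mainTheorem6:
  fixes M :: "('v, 'e) cgame"
    and d :: "(('e \<times> ('v \<times> 'v)) + ('v \<times> (('e \<times> 'v) + ('v \<times> 'e)))) list set"
    and e :: "(('e \<times> unit) + ('v \<times> unit)) list set"
  assumes "comm_comonoid M d e"
  shows "negative_game M"
proof -
  have pg: "payoff_game M" and hd: "hom M (tensor M M) d" and he: "hom M unitG e"
    and cu: "compS M (tensor M M) M d
         (compS (tensor M M) (tensor unitG M) M (tensorS M unitG M M e (idS M)) (lunitS M))
       = idS M"
    and cm: "compS M (tensor M M) (tensor M M) d (symS M M) = d"
    using assms unfolding comm_comonoid_def by auto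
  have cg: "conway_game M" using pg unfolding payoff_game_def by auto
  have st: "strategy (tensor (dual M) (tensor M M)) d" using hd unfolding hom_def winning_def by auto
  have rP: "root M \<in> Pos M" using cg by (simp add: conway_game_def)
  have cgm: "\<And>a. a \<in> Mv M \<Longrightarrow> src M a \<in> Pos M \<and> tgt M a \<in> Pos M \<and> pol M a \<in> {-1, 1}"
    using cg by (simp add: conway_game_def)
  show ?thesis unfolding negative_game_def
  proof (intro ballI impI, rule ccontr)
    fix m assume m: "m \<in> Mv M" "src M m = root M" "pol M m \<noteq> -1"
    let ?r = "root M"
    have pm: "pol M m = 1" using cgm[OF m(1)] m(3) by auto
    define s0 :: "(('e \<times> 'v) + ('v \<times> 'e)) list" where "s0 = [Inl (m, ?r), Inr (tgt M m, m)]"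
    have "s0 \<in> idS M"
    proof -
      have k: "\<forall>k. even k \<longrightarrow> map id (projL (take k s0)) = projR (take k s0)"
      proof (intro allI impI)
        fix k :: nat assume "even k"
        then have "k = 0 \<or> k \<ge> 2" by presburger
        then show "map id (projL (take k s0)) = projR (take k s0)" by (auto simp: s0_def)
      qed
      have pl: "play (tensor (dual M) M) s0"
        using m rP cgm[OF m(1)] unfolding play_def s0_def by auto
      have al: "alt (tensor (dual M) M) s0"
        using pm unfolding alt_def s0_def by (auto simp: less_Suc_eq)
      show ?thesis using pl al k unfolding idS_def copycat_def by (simp add: s0_def)
    qed
    then have "s0 \<in> compS M (tensor M M) M d
         (compS (tensor M M) (tensor unitG M) M (tensorS M unitG M M e (idS M)) (lunitS M))"
      by (subst cu)
    then obtain u where uAB: "projAB u \<in> d"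
      and uBC: "projBC u \<in> compS (tensor M M) (tensor unitG M) M (tensorS M unitG M M e (idS M)) (lunitS M)"
      and uAC: "projAC u = s0"
      unfolding compS_def[of M] by blast
    have fd: "fstOpp (tensor (dual M) (tensor M M)) d"
      by (rule alt_fstOpp) (use st in \<open>auto simp: strategy_def\<close>)
    have ft: "fstOpp (tensor (dual (tensor M M)) (tensor unitG M)) (tensorS M unitG M M e (idS M))"
      by (rule alt_fstOpp) (auto simp: tensorS_def)
    have fl: "fstOpp (tensor (dual (tensor unitG M)) M) (lunitS M)"
      by (rule alt_fstOpp) (auto simp: lunitS_def copycat_def)
    have fc: "fstOpp (tensor (dual (tensor M M)) M)
        (compS (tensor M M) (tensor unitG M) M (tensorS M unitG M M e (idS M)) (lunitS M))"
      by (rule comp_fstOpp[OF ft fl])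
    have "u \<noteq> []" using uAC by (auto simp: s0_def)
    then obtain x u' where u: "u = x # u'" by (cases u) auto
    obtain y z where x: "x = Inl (Inl (m, y), z)" and u'AC: "projAC u' = [Inr (tgt M m, m)]"
    proof (cases x rule: move_cases)
      case (1 a y z)
      then show ?thesis using that uAC u by (auto simp: s0_def)
    next
      case (2 x' b z)
      then show ?thesis using fd fc uAB uBC u unfolding fstOpp_def by force
    next
      case (3 x' y c)
      then show ?thesis using uAC u by (auto simp: s0_def)
    qed
    have noinl: "\<forall>w\<in>set (projAB u'). \<not> isl w" using projAC_noInl[of u'] u'AC by auto
    have ev: "even (length (projAB u))" using st uAB unfolding strategy_def by auto
    then have "projAB u' \<noteq> []" using u x by auto
    then obtain w rest where w: "projAB u' = w # rest" by (cases "projAB u'") auto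
    then obtain x' b where wb: "w = Inr (x', b)" using noinl by (cases w) auto
    have "take 2 (projAB u) \<in> d" using st uAB unfolding strategy_def by auto
    then have t: "[Inl (m, y), Inr (x', b)] \<in> d" using u x w wb by simp
    have pt: "play (tensor (dual M) (tensor M M)) [Inl (m, y), Inr (x', b)]"
      and at: "alt (tensor (dual M) (tensor M M)) [Inl (m, y), Inr (x', b)]"
      using st t unfolding strategy_def by auto
    from pt have y: "y = (?r, ?r)" and x': "x' = tgt M m" and bM: "b \<in> Mv (tensor M M)"
      and bs: "src (tensor M M) b = (?r, ?r)"
      unfolding play_def by auto
    from at have bp: "pol (tensor M M) b = 1" unfolding alt_def
      by (metis (no_types) One_nat_def add_0 length_Cons list.size(3) lessI nth_Cons_0 nth_Cons_Suc
          odd_one one_less_numeral_iff semiring_norm(76) dual_simps(6) tensor_simps(9) numeral_2_eq_2)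
    show False
      by (rule sym_part[OF st cm cg m(1) m(2) _ bM bs bp]) (use t y x' in simp)
  qed
qed

end
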